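(* Let $\mathcal A$ be an abelian category. Let $0\to F\xrightarrow{i} M\xrightarrow{d} M/F\to 0$ be a fully invariant short exact sequence and $0\to G\xrightarrow{j} M\xrightarrow{p} M/G\to 0$ a short exact sequence in $\mathcal A$. (1) Let $u:F\cap G\to G$ be the inclusion monomorphism. (i) If the second short exact sequence is also fully invariant, then the inclusion monomorphism $ju:F\cap G\to M$ is fully invariant. (ii) If every morphism $G\to G$ can be extended to a morphism $M\to M$, then $u:F\cap G\to G$ is fully invariant. (2) Let $q:M/G\to M/(F+G)$ be the induced epimorphism. (i) If the second short exact sequence is also fully invariant, then the induced epimorphism $qp:M\to M/(F+G)$ is fully coinvariant. (ii) If every morphism $M/G\to M/G$ can be lifted to a morphism $M\to M$, then $q:M/G\to M/(F+G)$ is fully coinvariant.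
   Context: A monomorphism $i:K\to M$ in an abelian category is called fully invariant if for every morphism $h:M\to M$ there is a morphism $\alpha:K\to K$ with $hi=i\alpha$. An epimorphism $d:M\to C$ is called fully coinvariant if for every morphism $h:M\to M$ there is $\beta:C\to C$ with $dh=\beta d$. A short exact sequence $0\to F\xrightarrow{i} M\xrightarrow{d} C\to 0$ is called fully invariant if $i$ is fully invariant (equivalently, $d$ is fully coinvariant). *)

theory Defs
  imports Main
begin

text \<open>A (small, explicitly given) preadditive category: objects, arrows, source/target,
  composition (cmp g f = g after f), identities, addition of parallel arrows and zero arrows.\<close>

record ('o,'m) cat =
  Ob  :: "'o set"
  Ar  :: "'m set"
  src :: "'m \<Rightarrow> 'o"
  tgt :: "'m \<Rightarrow> 'o"
  cmp :: "'m \<Rightarrow> 'm \<Rightarrow> 'm"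
  idm :: "'o \<Rightarrow> 'm"
  add :: "'m \<Rightarrow> 'm \<Rightarrow> 'm"
  zro :: "'o \<Rightarrow> 'o \<Rightarrow> 'm"

definition hom :: "('o,'m) cat \<Rightarrow> 'o \<Rightarrow> 'o \<Rightarrow> 'm set" where
  "hom C a b = {f \<in> Ar C. src C f = a \<and> tgt C f = b}"

definition category :: "('o,'m) cat \<Rightarrow> bool" where
  "category C \<longleftrightarrow>
     (\<forall>f\<in>Ar C. src C f \<in> Ob C \<and> tgt C f \<in> Ob C) \<and>
     (\<forall>a\<in>Ob C. idm C a \<in> hom C a a) \<and>
     (\<forall>f\<in>Ar C. \<forall>g\<in>Ar C. tgt C f = src C g \<longrightarrow> cmp C g f \<in> hom C (src C f) (tgt C g)) \<and>
     (\<forall>f\<in>Ar C. cmp C (idm C (tgt C f)) f = f \<and> cmp C f (idm C (src C f)) = f) \<and>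
     (\<forall>f\<in>Ar C. \<forall>g\<in>Ar C. \<forall>h\<in>Ar C. tgt C f = src C g \<and> tgt C g = src C h \<longrightarrow>
        cmp C h (cmp C g f) = cmp C (cmp C h g) f)"

definition preadditive :: "('o,'m) cat \<Rightarrow> bool" where
  "preadditive C \<longleftrightarrow> category C \<and>
     (\<forall>a\<in>Ob C. \<forall>b\<in>Ob C.
        zro C a b \<in> hom C a b \<and>
        (\<forall>f\<in>hom C a b. \<forall>g\<in>hom C a b. add C f g \<in> hom C a b \<and> add C f g = add C g f) \<and>
        (\<forall>f\<in>hom C a b. \<forall>g\<in>hom C a b. \<forall>h\<in>hom C a b. add C (add C f g) h = add C f (add C g h)) \<and>
        (\<forall>f\<in>hom C a b. add C f (zro C a b) = f) \<and>
        (\<forall>f\<in>hom C a b. \<exists>g\<in>hom C a b. add C f g = zro C a b)) \<and>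
     (\<forall>a\<in>Ob C. \<forall>b\<in>Ob C. \<forall>c\<in>Ob C.
        (\<forall>f\<in>hom C a b. \<forall>g\<in>hom C b c. \<forall>g'\<in>hom C b c.
            cmp C (add C g g') f = add C (cmp C g f) (cmp C g' f)) \<and>
        (\<forall>f\<in>hom C a b. \<forall>f'\<in>hom C a b. \<forall>g\<in>hom C b c.
            cmp C g (add C f f') = add C (cmp C g f) (cmp C g f')))"

definition is_zero_obj :: "('o,'m) cat \<Rightarrow> 'o \<Rightarrow> bool" where
  "is_zero_obj C z \<longleftrightarrow> z \<in> Ob C \<and>
     (\<forall>a\<in>Ob C. (\<exists>!f. f \<in> hom C z a) \<and> (\<exists>!f. f \<in> hom C a z))"

definition biproduct :: "('o,'m) cat \<Rightarrow> 'o \<Rightarrow> 'o \<Rightarrow> 'o \<Rightarrow> 'm \<Rightarrow> 'm \<Rightarrow> 'm \<Rightarrow> 'm \<Rightarrow> bool" where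
  "biproduct C a b c p1 p2 i1 i2 \<longleftrightarrow>
     p1 \<in> hom C c a \<and> p2 \<in> hom C c b \<and> i1 \<in> hom C a c \<and> i2 \<in> hom C b c \<and>
     cmp C p1 i1 = idm C a \<and> cmp C p2 i2 = idm C b \<and>
     cmp C p1 i2 = zro C b a \<and> cmp C p2 i1 = zro C a b \<and>
     add C (cmp C i1 p1) (cmp C i2 p2) = idm C c"

definition mono :: "('o,'m) cat \<Rightarrow> 'm \<Rightarrow> bool" where
  "mono C f \<longleftrightarrow> f \<in> Ar C \<and>
     (\<forall>g\<in>Ar C. \<forall>h\<in>Ar C. tgt C g = src C f \<and> tgt C h = src C f \<and> src C g = src C h \<and>
        cmp C f g = cmp C f h \<longrightarrow> g = h)"

definition epi :: "('o,'m) cat \<Rightarrow> 'm \<Rightarrow> bool" where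
  "epi C f \<longleftrightarrow> f \<in> Ar C \<and>
     (\<forall>g\<in>Ar C. \<forall>h\<in>Ar C. src C g = tgt C f \<and> src C h = tgt C f \<and> tgt C g = tgt C h \<and>
        cmp C g f = cmp C h f \<longrightarrow> g = h)"

definition is_kernel :: "('o,'m) cat \<Rightarrow> 'm \<Rightarrow> 'm \<Rightarrow> bool" where
  "is_kernel C k f \<longleftrightarrow> f \<in> Ar C \<and> k \<in> Ar C \<and> tgt C k = src C f \<and>
     cmp C f k = zro C (src C k) (tgt C f) \<and>
     (\<forall>x\<in>Ob C. \<forall>g\<in>hom C x (src C f). cmp C f g = zro C x (tgt C f) \<longrightarrow>
        (\<exists>!t. t \<in> hom C x (src C k) \<and> cmp C k t = g))"

definition is_cokernel :: "('o,'m) cat \<Rightarrow> 'm \<Rightarrow> 'm \<Rightarrow> bool" where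
  "is_cokernel C c f \<longleftrightarrow> f \<in> Ar C \<and> c \<in> Ar C \<and> src C c = tgt C f \<and>
     cmp C c f = zro C (src C f) (tgt C c) \<and>
     (\<forall>x\<in>Ob C. \<forall>g\<in>hom C (tgt C f) x. cmp C g f = zro C (src C f) x \<longrightarrow>
        (\<exists>!t. t \<in> hom C (tgt C c) x \<and> cmp C t c = g))"

definition abelian :: "('o,'m) cat \<Rightarrow> bool" where
  "abelian C \<longleftrightarrow> preadditive C \<and>
     (\<exists>z. is_zero_obj C z) \<and>
     (\<forall>a\<in>Ob C. \<forall>b\<in>Ob C. \<exists>c p1 p2 i1 i2. biproduct C a b c p1 p2 i1 i2) \<and>
     (\<forall>f\<in>Ar C. \<exists>k. is_kernel C k f) \<and>
     (\<forall>f\<in>Ar C. \<exists>c. is_cokernel C c f) \<and>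
     (\<forall>f. mono C f \<longrightarrow> (\<exists>g\<in>Ar C. is_kernel C f g)) \<and>
     (\<forall>f. epi C f \<longrightarrow> (\<exists>g\<in>Ar C. is_cokernel C f g))"

definition short_exact :: "('o,'m) cat \<Rightarrow> 'm \<Rightarrow> 'm \<Rightarrow> bool" where
  "short_exact C i d \<longleftrightarrow> mono C i \<and> epi C d \<and> is_kernel C i d \<and> is_cokernel C d i"

definition fully_invariant :: "('o,'m) cat \<Rightarrow> 'm \<Rightarrow> bool" where
  "fully_invariant C i \<longleftrightarrow> mono C i \<and>
     (\<forall>h\<in>hom C (tgt C i) (tgt C i). \<exists>\<alpha>\<in>hom C (src C i) (src C i). cmp C h i = cmp C i \<alpha>)"

definition fully_coinvariant :: "('o,'m) cat \<Rightarrow> 'm \<Rightarrow> bool" where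
  "fully_coinvariant C d \<longleftrightarrow> epi C d \<and>
     (\<forall>h\<in>hom C (src C d) (src C d). \<exists>\<beta>\<in>hom C (tgt C d) (tgt C d). cmp C d h = cmp C \<beta> d)"

definition fully_invariant_ses :: "('o,'m) cat \<Rightarrow> 'm \<Rightarrow> 'm \<Rightarrow> bool" where
  "fully_invariant_ses C i d \<longleftrightarrow> short_exact C i d \<and> fully_invariant C i"

text \<open>(a : X -> F, u : X -> G) is a pullback of (i : F -> M, j : G -> M);
  for monos i, j this is the intersection F \<inter> G with its inclusions.\<close>
definition is_pullback :: "('o,'m) cat \<Rightarrow> 'm \<Rightarrow> 'm \<Rightarrow> 'm \<Rightarrow> 'm \<Rightarrow> bool" where
  "is_pullback C a u i j \<longleftrightarrow> a \<in> Ar C \<and> u \<in> Ar C \<and> i \<in> Ar C \<and> j \<in> Ar C \<and>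
     src C a = src C u \<and> tgt C a = src C i \<and> tgt C u = src C j \<and> tgt C i = tgt C j \<and>
     cmp C i a = cmp C j u \<and>
     (\<forall>x\<in>Ob C. \<forall>f\<in>hom C x (src C i). \<forall>g\<in>hom C x (src C j). cmp C i f = cmp C j g \<longrightarrow>
        (\<exists>!t. t \<in> hom C x (src C a) \<and> cmp C a t = f \<and> cmp C u t = g))"

end

theory Submission
  imports Defs
begin

locale pa = fixes C :: "('o,'m) cat" assumes PA: "preadditive C"
begin

lemma cat: "category C" using PA preadditive_def by blast

lemma homD: "f \<in> hom C a b \<Longrightarrow> f \<in> Ar C \<and> src C f = a \<and> tgt C f = b"
  by (simp add: hom_def)

lemma homI: "f \<in> Ar C \<Longrightarrow> f \<in> hom C (src C f) (tgt C f)"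
  by (simp add: hom_def)

lemma hom_Ob: "f \<in> hom C a b \<Longrightarrow> a \<in> Ob C \<and> b \<in> Ob C"
  using cat unfolding category_def hom_def by auto

lemma comp: "f \<in> hom C a b \<Longrightarrow> g \<in> hom C b c \<Longrightarrow> cmp C g f \<in> hom C a c"
  using cat unfolding category_def hom_def by auto

lemma assoc: "f \<in> hom C a b \<Longrightarrow> g \<in> hom C b c \<Longrightarrow> h \<in> hom C c d \<Longrightarrow>
   cmp C h (cmp C g f) = cmp C (cmp C h g) f"
  using cat unfolding category_def hom_def by auto

lemma zhom: "a \<in> Ob C \<Longrightarrow> b \<in> Ob C \<Longrightarrow> zro C a b \<in> hom C a b"
  using PA unfolding preadditive_def by blast

lemma addhom: "f \<in> hom C a b \<Longrightarrow> g \<in> hom C a b \<Longrightarrow> add C f g \<in> hom C a b"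
  using PA hom_Ob unfolding preadditive_def by blast

lemma add_assoc: "f \<in> hom C a b \<Longrightarrow> g \<in> hom C a b \<Longrightarrow> h \<in> hom C a b \<Longrightarrow>
   add C (add C f g) h = add C f (add C g h)"
  using PA hom_Ob unfolding preadditive_def by blast

lemma add_zero: "f \<in> hom C a b \<Longrightarrow> add C f (zro C a b) = f"
  using PA hom_Ob unfolding preadditive_def by blast

lemma add_inv: "f \<in> hom C a b \<Longrightarrow> \<exists>g\<in>hom C a b. add C f g = zro C a b"
  using PA hom_Ob unfolding preadditive_def by blast

lemma distl: "f \<in> hom C a b \<Longrightarrow> g \<in> hom C b c \<Longrightarrow> g' \<in> hom C b c \<Longrightarrow>
   cmp C (add C g g') f = add C (cmp C g f) (cmp C g' f)"
proof -
  assume a: "f \<in> hom C a b" "g \<in> hom C b c" "g' \<in> hom C b c"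
  then have "a \<in> Ob C" "b \<in> Ob C" "c \<in> Ob C" using hom_Ob by blast+
  then show ?thesis using PA a unfolding preadditive_def by blast
qed

lemma distr: "f \<in> hom C a b \<Longrightarrow> f' \<in> hom C a b \<Longrightarrow> g \<in> hom C b c \<Longrightarrow>
   cmp C g (add C f f') = add C (cmp C g f) (cmp C g f')"
proof -
  assume a: "f \<in> hom C a b" "f' \<in> hom C a b" "g \<in> hom C b c"
  then have "a \<in> Ob C" "b \<in> Ob C" "c \<in> Ob C" using hom_Ob by blast+
  then show ?thesis using PA a unfolding preadditive_def by blast
qed

lemma idem_zero: assumes x: "x \<in> hom C a b" and e: "add C x x = x" shows "x = zro C a b"
proof -
  obtain y where y: "y \<in> hom C a b" "add C x y = zro C a b" using add_inv[OF x] by blast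
  have "x = add C x (zro C a b)" using add_zero[OF x] by simp
  also have "\<dots> = add C x (add C x y)" using y by simp
  also have "\<dots> = add C (add C x x) y" using add_assoc[OF x x y(1)] by simp
  also have "\<dots> = zro C a b" using e y by simp
  finally show ?thesis .
qed

lemma zadd: "a \<in> Ob C \<Longrightarrow> b \<in> Ob C \<Longrightarrow> add C (zro C a b) (zro C a b) = zro C a b"
  using add_zero zhom by blast

lemma zcomp_r: assumes f: "f \<in> hom C a b" and c: "c \<in> Ob C"
  shows "cmp C (zro C b c) f = zro C a c"
proof -
  have ob: "a \<in> Ob C" "b \<in> Ob C" using hom_Ob f by blast+
  have z: "zro C b c \<in> hom C b c" using zhom ob c by blast
  have h: "cmp C (zro C b c) f \<in> hom C a c" using comp f z by blast
  have "add C (cmp C (zro C b c) f) (cmp C (zro C b c) f) = cmp C (add C (zro C b c) (zro C b c)) f"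
    using distl[OF f z z] by simp
  also have "\<dots> = cmp C (zro C b c) f" using zadd ob c by simp
  finally show ?thesis using idem_zero h by blast
qed

lemma zcomp_l: assumes g: "g \<in> hom C b c" and a: "a \<in> Ob C"
  shows "cmp C g (zro C a b) = zro C a c"
proof -
  have ob: "b \<in> Ob C" "c \<in> Ob C" using hom_Ob g by blast+
  have z: "zro C a b \<in> hom C a b" using zhom ob a by blast
  have h: "cmp C g (zro C a b) \<in> hom C a c" using comp g z by blast
  have "add C (cmp C g (zro C a b)) (cmp C g (zro C a b)) = cmp C g (add C (zro C a b) (zro C a b))"
    using distr[OF z z g] by simp
  also have "\<dots> = cmp C g (zro C a b)" using zadd ob a by simp
  finally show ?thesis using idem_zero h by blast
qed

lemma pb_homs: assumes "is_pullback C a u i j"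
  shows "a \<in> hom C (src C a) (src C i) \<and> u \<in> hom C (src C a) (src C j) \<and>
         i \<in> hom C (src C i) (tgt C i) \<and> j \<in> hom C (src C j) (tgt C i)"
  using assms unfolding is_pullback_def hom_def by auto

lemma pb_ex: assumes P: "is_pullback C a u i j" and f: "f \<in> hom C x (src C i)"
  and g: "g \<in> hom C x (src C j)" and e: "cmp C i f = cmp C j g"
  shows "\<exists>t\<in>hom C x (src C a). cmp C a t = f \<and> cmp C u t = g"
proof -
  have "x \<in> Ob C" using hom_Ob f by blast
  then show ?thesis using P f g e unfolding is_pullback_def by blast
qed

lemma pb_uniq: assumes P: "is_pullback C a u i j" and g: "g \<in> hom C x (src C a)"
  and h: "h \<in> hom C x (src C a)" and e1: "cmp C a g = cmp C a h" and e2: "cmp C u g = cmp C u h"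
  shows "g = h"
proof -
  have H: "a \<in> hom C (src C a) (src C i)" "u \<in> hom C (src C a) (src C j)"
     "i \<in> hom C (src C i) (tgt C i)" "j \<in> hom C (src C j) (tgt C i)" using pb_homs[OF P] by auto
  have x: "x \<in> Ob C" using hom_Ob g by blast
  have f1: "cmp C a g \<in> hom C x (src C i)" using comp g H by blast
  have f2: "cmp C u g \<in> hom C x (src C j)" using comp g H by blast
  have "cmp C i (cmp C a g) = cmp C (cmp C i a) g" using assoc g H by blast
  also have "\<dots> = cmp C (cmp C j u) g" using P unfolding is_pullback_def by simp
  also have "\<dots> = cmp C j (cmp C u g)" using assoc g H by metis
  finally have e: "cmp C i (cmp C a g) = cmp C j (cmp C u g)" .
  have "\<exists>!t. t \<in> hom C x (src C a) \<and> cmp C a t = cmp C a g \<and> cmp C u t = cmp C u g"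
    using P x f1 f2 e unfolding is_pullback_def by blast
  then show ?thesis using g h e1 e2 by metis
qed

lemma monoD: "mono C m \<Longrightarrow> g \<in> hom C x (src C m) \<Longrightarrow> h \<in> hom C x (src C m) \<Longrightarrow>
   cmp C m g = cmp C m h \<Longrightarrow> g = h"
  unfolding mono_def hom_def by auto

lemma epiD: "epi C e \<Longrightarrow> g \<in> hom C (tgt C e) y \<Longrightarrow> h \<in> hom C (tgt C e) y \<Longrightarrow>
   cmp C g e = cmp C h e \<Longrightarrow> g = h"
  unfolding epi_def hom_def by auto

lemma pb_mono_u: assumes P: "is_pullback C a u i j" and mi: "mono C i" and mj: "mono C j"
  shows "mono C u"
proof -
  have H: "a \<in> hom C (src C a) (src C i)" "u \<in> hom C (src C a) (src C j)"
     "i \<in> hom C (src C i) (tgt C i)" "j \<in> hom C (src C j) (tgt C i)" using pb_homs[OF P] by auto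
  have "\<forall>g\<in>Ar C. \<forall>h\<in>Ar C. tgt C g = src C u \<and> tgt C h = src C u \<and> src C g = src C h \<and>
        cmp C u g = cmp C u h \<longrightarrow> g = h"
  proof (intro ballI impI)
    fix g h assume g: "g \<in> Ar C" and h: "h \<in> Ar C" and c: "tgt C g = src C u \<and> tgt C h = src C u \<and> src C g = src C h \<and>
        cmp C u g = cmp C u h"
    have gh: "g \<in> hom C (src C g) (src C a)" "h \<in> hom C (src C g) (src C a)"
      using g h c H unfolding hom_def by auto
    have "cmp C i (cmp C a g) = cmp C (cmp C i a) g" using assoc gh H by blast
    also have "\<dots> = cmp C (cmp C j u) g" using P unfolding is_pullback_def by simp
    also have "\<dots> = cmp C j (cmp C u g)" using assoc gh H by metis
    also have "\<dots> = cmp C j (cmp C u h)" using c by simp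
    also have "\<dots> = cmp C (cmp C j u) h" using assoc gh H by metis
    also have "\<dots> = cmp C (cmp C i a) h" using P unfolding is_pullback_def by simp
    also have "\<dots> = cmp C i (cmp C a h)" using assoc gh H by metis
    finally have "cmp C a g = cmp C a h" using monoD[OF mi] comp gh H by blast
    then show "g = h" using pb_uniq[OF P gh] c by blast
  qed
  then show ?thesis unfolding mono_def using H homD by blast
qed

lemma pb_mono_ju: assumes P: "is_pullback C a u i j" and mi: "mono C i" and mj: "mono C j"
  shows "mono C (cmp C j u)"
proof -
  have H: "a \<in> hom C (src C a) (src C i)" "u \<in> hom C (src C a) (src C j)"
     "i \<in> hom C (src C i) (tgt C i)" "j \<in> hom C (src C j) (tgt C i)" using pb_homs[OF P] by auto
  have ju: "cmp C j u \<in> hom C (src C a) (tgt C i)" using comp H by blast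
  have mu: "mono C u" using pb_mono_u assms by blast
  have "\<forall>g\<in>Ar C. \<forall>h\<in>Ar C. tgt C g = src C (cmp C j u) \<and> tgt C h = src C (cmp C j u) \<and> src C g = src C h \<and>
        cmp C (cmp C j u) g = cmp C (cmp C j u) h \<longrightarrow> g = h"
  proof (intro ballI impI)
    fix g h assume g: "g \<in> Ar C" and h: "h \<in> Ar C" and c: "tgt C g = src C (cmp C j u) \<and> tgt C h = src C (cmp C j u) \<and> src C g = src C h \<and>
        cmp C (cmp C j u) g = cmp C (cmp C j u) h"
    have sju: "src C (cmp C j u) = src C a" using ju by (simp add: hom_def)
    have su: "src C u = src C a" using H by (simp add: hom_def)
    have gh: "g \<in> hom C (src C g) (src C a)" "h \<in> hom C (src C g) (src C a)"
      using g h c sju by (auto simp: hom_def)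
    have "cmp C j (cmp C u g) = cmp C (cmp C j u) g" using assoc[OF gh(1) H(2) H(4)] by simp
    also have "\<dots> = cmp C (cmp C j u) h" using c by simp
    also have "\<dots> = cmp C j (cmp C u h)" using assoc[OF gh(2) H(2) H(4)] by simp
    finally have "cmp C u g = cmp C u h" using monoD[OF mj] comp gh H by blast
    then show "g = h" using monoD[OF mu] gh su by simp
  qed
  then show ?thesis unfolding mono_def using ju homD by blast
qed

lemma coker_epi: assumes K: "is_cokernel C c m" shows "epi C c"
proof -
  have cA: "c \<in> Ar C" and mA: "m \<in> Ar C" and sc: "src C c = tgt C m"
    and cm: "cmp C c m = zro C (src C m) (tgt C c)" using K unfolding is_cokernel_def by auto
  have ch: "c \<in> hom C (tgt C m) (tgt C c)" using cA sc by (auto simp: hom_def)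
  have mh: "m \<in> hom C (src C m) (tgt C m)" using mA by (auto simp: hom_def)
  have "\<forall>g\<in>Ar C. \<forall>h\<in>Ar C. src C g = tgt C c \<and> src C h = tgt C c \<and> tgt C g = tgt C h \<and>
        cmp C g c = cmp C h c \<longrightarrow> g = h"
  proof (intro ballI impI)
    fix g h assume g: "g \<in> Ar C" and h: "h \<in> Ar C" and e: "src C g = tgt C c \<and> src C h = tgt C c \<and> tgt C g = tgt C h \<and>
        cmp C g c = cmp C h c"
    define y where "y = tgt C g"
    have gh: "g \<in> hom C (tgt C c) y" "h \<in> hom C (tgt C c) y" using g h e y_def by (auto simp: hom_def)
    have y: "y \<in> Ob C" "src C m \<in> Ob C" using hom_Ob gh mh by blast+
    have gc: "cmp C g c \<in> hom C (tgt C m) y" using comp ch gh by blast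
    have "cmp C (cmp C g c) m = cmp C g (cmp C c m)" using assoc mh ch gh by metis
    also have "\<dots> = zro C (src C m) y" using cm zcomp_l gh y by simp
    finally have "\<exists>!t. t \<in> hom C (tgt C c) y \<and> cmp C t c = cmp C g c"
      using K y gc unfolding is_cokernel_def by blast
    then show "g = h" using gh e by metis
  qed
  then show ?thesis unfolding epi_def using cA by blast
qed

lemma coker_fact: assumes K: "is_cokernel C c m" and g: "g \<in> hom C (tgt C m) x"
  and e: "cmp C g m = zro C (src C m) x"
  shows "\<exists>t\<in>hom C (tgt C c) x. cmp C t c = g"
proof -
  have "x \<in> Ob C" using hom_Ob g by blast
  then show ?thesis using K g e unfolding is_cokernel_def by blast
qed

lemma biprod_zero: assumes Bp: "biproduct C a b B p1 p2 i1 i2" and f: "f \<in> hom C B y"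
  and z1: "cmp C f i1 = zro C a y" and z2: "cmp C f i2 = zro C b y"
  shows "f = zro C B y"
proof -
  have H: "p1 \<in> hom C B a" "p2 \<in> hom C B b" "i1 \<in> hom C a B" "i2 \<in> hom C b B"
    and S: "add C (cmp C i1 p1) (cmp C i2 p2) = idm C B" using Bp unfolding biproduct_def by auto
  have ob: "B \<in> Ob C" "y \<in> Ob C" "a \<in> Ob C" "b \<in> Ob C" using hom_Ob H f by blast+
  have c1: "cmp C i1 p1 \<in> hom C B B" and c2: "cmp C i2 p2 \<in> hom C B B" using comp H by blast+
  have "f = cmp C f (idm C B)" using cat f unfolding category_def hom_def by auto
  also have "\<dots> = add C (cmp C f (cmp C i1 p1)) (cmp C f (cmp C i2 p2))" using S distr[OF c1 c2 f] by simp
  also have "\<dots> = add C (cmp C (cmp C f i1) p1) (cmp C (cmp C f i2) p2)" using assoc H f by metis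
  also have "\<dots> = add C (zro C B y) (zro C B y)" using z1 z2 zcomp_r H ob by simp
  also have "\<dots> = zro C B y" using zadd ob by simp
  finally show ?thesis .
qed

end

theorem proposition2p7:
  fixes C :: "('o,'m) cat" and i d j p :: 'm
  assumes "abelian C"
    and "fully_invariant_ses C i d"
    and "short_exact C j p"
    and "tgt C i = tgt C j"
  shows
   "(\<forall>a u. is_pullback C a u i j \<longrightarrow>
        (fully_invariant_ses C j p \<longrightarrow> fully_invariant C (cmp C j u)) \<and>
        ((\<forall>g\<in>hom C (src C j) (src C j). \<exists>h\<in>hom C (tgt C j) (tgt C j). cmp C h j = cmp C j g)
            \<longrightarrow> fully_invariant C u))
    \<and>
    (\<forall>B \<pi>1 \<pi>2 \<iota>1 \<iota>2 s m e c q.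
        biproduct C (src C i) (src C j) B \<pi>1 \<pi>2 \<iota>1 \<iota>2 \<and>
        s \<in> hom C B (tgt C i) \<and> cmp C s \<iota>1 = i \<and> cmp C s \<iota>2 = j \<and>
        mono C m \<and> epi C e \<and> e \<in> hom C B (src C m) \<and> cmp C m e = s \<and>
        is_cokernel C c m \<and>
        q \<in> hom C (tgt C p) (tgt C c) \<and> cmp C q p = c \<longrightarrow>
        (fully_invariant_ses C j p \<longrightarrow> fully_coinvariant C (cmp C q p)) \<and>
        ((\<forall>g\<in>hom C (tgt C p) (tgt C p). \<exists>h\<in>hom C (src C p) (src C p). cmp C p h = cmp C g p)
            \<longrightarrow> fully_coinvariant C q))"
proof -
  interpret pa C using assms(1) unfolding abelian_def by unfold_locales blast
  have mi: "mono C i" and ikd: "is_kernel C i d" using assms(2) unfolding fully_invariant_ses_def short_exact_def by auto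
  have FIi: "\<forall>h\<in>hom C (tgt C i) (tgt C i). \<exists>\<alpha>\<in>hom C (src C i) (src C i). cmp C h i = cmp C i \<alpha>"
    using assms(2) unfolding fully_invariant_ses_def fully_invariant_def by auto
  have mj: "mono C j" and ep: "epi C p" and pcj: "is_cokernel C p j"
    using assms(3) unfolding short_exact_def by auto
  have ih: "i \<in> hom C (src C i) (tgt C i)" using mi unfolding mono_def hom_def by auto
  have jh: "j \<in> hom C (src C j) (tgt C i)" using mj assms(4) unfolding mono_def hom_def by auto
  have ph: "p \<in> hom C (tgt C i) (tgt C p)" and pj0: "cmp C p j = zro C (src C j) (tgt C p)"
    using pcj assms(4) unfolding is_cokernel_def hom_def by auto
  have P1: "\<forall>a u. is_pullback C a u i j \<longrightarrow>
        (fully_invariant_ses C j p \<longrightarrow> fully_invariant C (cmp C j u)) \<and>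
        ((\<forall>g\<in>hom C (src C j) (src C j). \<exists>h\<in>hom C (tgt C j) (tgt C j). cmp C h j = cmp C j g)
            \<longrightarrow> fully_invariant C u)"
  proof (intro allI impI)
    fix a u assume P: "is_pullback C a u i j"
    have H: "a \<in> hom C (src C a) (src C i)" "u \<in> hom C (src C a) (src C j)"
      using pb_homs[OF P] by auto
    have ju: "cmp C j u \<in> hom C (src C a) (tgt C i)" using comp H jh by blast
    have key: "\<exists>t\<in>hom C (src C a) (src C a). cmp C u t = cmp C g u"
      if h: "h \<in> hom C (tgt C i) (tgt C i)" and g: "g \<in> hom C (src C j) (src C j)"
        and hj: "cmp C h j = cmp C j g" for h g
    proof -
      obtain \<alpha> where al: "\<alpha> \<in> hom C (src C i) (src C i)" "cmp C h i = cmp C i \<alpha>" using FIi h by blast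
      have f1: "cmp C \<alpha> a \<in> hom C (src C a) (src C i)" using comp H al by blast
      have f2: "cmp C g u \<in> hom C (src C a) (src C j)" using comp H g by blast
      have "cmp C i (cmp C \<alpha> a) = cmp C (cmp C i \<alpha>) a" using assoc H al ih by metis
      also have "\<dots> = cmp C (cmp C h i) a" using al by simp
      also have "\<dots> = cmp C h (cmp C i a)" using assoc H ih h by metis
      also have "\<dots> = cmp C h (cmp C j u)" using P unfolding is_pullback_def by simp
      also have "\<dots> = cmp C (cmp C h j) u" using assoc H jh h by metis
      also have "\<dots> = cmp C (cmp C j g) u" using hj by simp
      also have "\<dots> = cmp C j (cmp C g u)" using assoc H jh g by metis
      finally show ?thesis using pb_ex[OF P f1 f2] by blast
    qed
    have X1: "fully_invariant_ses C j p \<longrightarrow> fully_invariant C (cmp C j u)"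
    proof
      assume "fully_invariant_ses C j p"
      then have FIj: "\<forall>h\<in>hom C (tgt C j) (tgt C j). \<exists>\<alpha>\<in>hom C (src C j) (src C j). cmp C h j = cmp C j \<alpha>"
        unfolding fully_invariant_ses_def fully_invariant_def by auto
      have "\<forall>h\<in>hom C (tgt C (cmp C j u)) (tgt C (cmp C j u)). \<exists>\<alpha>\<in>hom C (src C (cmp C j u)) (src C (cmp C j u)).
             cmp C h (cmp C j u) = cmp C (cmp C j u) \<alpha>"
      proof
        fix h assume "h \<in> hom C (tgt C (cmp C j u)) (tgt C (cmp C j u))"
        then have h: "h \<in> hom C (tgt C i) (tgt C i)" using ju homD by metis
        obtain g where g: "g \<in> hom C (src C j) (src C j)" "cmp C h j = cmp C j g" using FIj h assms(4) by metis
        obtain t where t: "t \<in> hom C (src C a) (src C a)" "cmp C u t = cmp C g u" using key h g by blast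
        have "cmp C h (cmp C j u) = cmp C (cmp C h j) u" using assoc H jh h by metis
        also have "\<dots> = cmp C j (cmp C g u)" using g assoc H jh by metis
        also have "\<dots> = cmp C (cmp C j u) t" using t assoc H jh by metis
        finally show "\<exists>\<alpha>\<in>hom C (src C (cmp C j u)) (src C (cmp C j u)). cmp C h (cmp C j u) = cmp C (cmp C j u) \<alpha>"
          using t ju homD by metis
      qed
      then show "fully_invariant C (cmp C j u)" unfolding fully_invariant_def using pb_mono_ju P mi mj by blast
    qed
    have X2: "(\<forall>g\<in>hom C (src C j) (src C j). \<exists>h\<in>hom C (tgt C j) (tgt C j). cmp C h j = cmp C j g)
            \<longrightarrow> fully_invariant C u"
    proof
      assume L: "\<forall>g\<in>hom C (src C j) (src C j). \<exists>h\<in>hom C (tgt C j) (tgt C j). cmp C h j = cmp C j g"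
      have "\<forall>g\<in>hom C (tgt C u) (tgt C u). \<exists>\<alpha>\<in>hom C (src C u) (src C u). cmp C g u = cmp C u \<alpha>"
      proof
        fix g assume "g \<in> hom C (tgt C u) (tgt C u)"
        then have g: "g \<in> hom C (src C j) (src C j)" using H homD by metis
        obtain h where h: "h \<in> hom C (tgt C i) (tgt C i)" "cmp C h j = cmp C j g" using L g assms(4) by metis
        obtain t where t: "t \<in> hom C (src C a) (src C a)" "cmp C u t = cmp C g u" using key h g by blast
        then show "\<exists>\<alpha>\<in>hom C (src C u) (src C u). cmp C g u = cmp C u \<alpha>" using H homD by metis
      qed
      then show "fully_invariant C u" unfolding fully_invariant_def using pb_mono_u P mi mj by blast
    qed
    show "(fully_invariant_ses C j p \<longrightarrow> fully_invariant C (cmp C j u)) \<and>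
        ((\<forall>g\<in>hom C (src C j) (src C j). \<exists>h\<in>hom C (tgt C j) (tgt C j). cmp C h j = cmp C j g)
            \<longrightarrow> fully_invariant C u)" using X1 X2 by blast
  qed
  have P2: "\<forall>B \<pi>1 \<pi>2 \<iota>1 \<iota>2 s m e c q.
        biproduct C (src C i) (src C j) B \<pi>1 \<pi>2 \<iota>1 \<iota>2 \<and>
        s \<in> hom C B (tgt C i) \<and> cmp C s \<iota>1 = i \<and> cmp C s \<iota>2 = j \<and>
        mono C m \<and> epi C e \<and> e \<in> hom C B (src C m) \<and> cmp C m e = s \<and>
        is_cokernel C c m \<and>
        q \<in> hom C (tgt C p) (tgt C c) \<and> cmp C q p = c \<longrightarrow>
        (fully_invariant_ses C j p \<longrightarrow> fully_coinvariant C (cmp C q p)) \<and>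
        ((\<forall>g\<in>hom C (tgt C p) (tgt C p). \<exists>h\<in>hom C (src C p) (src C p). cmp C p h = cmp C g p)
            \<longrightarrow> fully_coinvariant C q)"
  proof (intro allI impI)
    fix B \<pi>1 \<pi>2 \<iota>1 \<iota>2 s m e c q
    assume A: "biproduct C (src C i) (src C j) B \<pi>1 \<pi>2 \<iota>1 \<iota>2 \<and>
        s \<in> hom C B (tgt C i) \<and> cmp C s \<iota>1 = i \<and> cmp C s \<iota>2 = j \<and>
        mono C m \<and> epi C e \<and> e \<in> hom C B (src C m) \<and> cmp C m e = s \<and>
        is_cokernel C c m \<and>
        q \<in> hom C (tgt C p) (tgt C c) \<and> cmp C q p = c"
    then have Bp: "biproduct C (src C i) (src C j) B \<pi>1 \<pi>2 \<iota>1 \<iota>2" and sh: "s \<in> hom C B (tgt C i)"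
      and s1: "cmp C s \<iota>1 = i" and s2: "cmp C s \<iota>2 = j" and mm: "mono C m" and ee: "epi C e"
      and eh: "e \<in> hom C B (src C m)" and me: "cmp C m e = s" and K: "is_cokernel C c m"
      and qh: "q \<in> hom C (tgt C p) (tgt C c)" and qp: "cmp C q p = c" by auto
    have \<iota>h: "\<iota>1 \<in> hom C (src C i) B" "\<iota>2 \<in> hom C (src C j) B" using Bp unfolding biproduct_def by auto
    have mh0: "m \<in> hom C (src C m) (tgt C m)" using mm unfolding mono_def hom_def by auto
    have "cmp C m e \<in> hom C B (tgt C m)" using comp eh mh0 by blast
    then have tm: "tgt C m = tgt C i" using me sh homD by metis
    have mh: "m \<in> hom C (src C m) (tgt C i)" using mh0 tm by simp
    have ch: "c \<in> hom C (tgt C i) (tgt C c)" and cm: "cmp C c m = zro C (src C m) (tgt C c)"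
      using K tm unfolding is_cokernel_def hom_def by auto
    have ob: "tgt C c \<in> Ob C" "src C i \<in> Ob C" "src C j \<in> Ob C" "B \<in> Ob C" "src C m \<in> Ob C" "tgt C i \<in> Ob C"
      using hom_Ob ch \<iota>h eh by blast+
    have epc: "epi C c" using coker_epi K by blast
    have ci: "cmp C c i = zro C (src C i) (tgt C c)"
    proof -
      have ei: "cmp C e \<iota>1 \<in> hom C (src C i) (src C m)" using comp \<iota>h eh by blast
      have "cmp C c i = cmp C c (cmp C (cmp C m e) \<iota>1)" using s1 me by simp
      also have "\<dots> = cmp C c (cmp C m (cmp C e \<iota>1))" using assoc[OF \<iota>h(1) eh mh] by simp
      also have "\<dots> = cmp C (cmp C c m) (cmp C e \<iota>1)" using assoc[OF ei mh ch] by simp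
      also have "\<dots> = zro C (src C i) (tgt C c)" using cm zcomp_r[OF ei] ob by simp
      finally show ?thesis .
    qed
    have cj: "cmp C c j = zro C (src C j) (tgt C c)"
    proof -
      have ei: "cmp C e \<iota>2 \<in> hom C (src C j) (src C m)" using comp \<iota>h eh by blast
      have "cmp C c j = cmp C c (cmp C (cmp C m e) \<iota>2)" using s2 me by simp
      also have "\<dots> = cmp C c (cmp C m (cmp C e \<iota>2))" using assoc[OF \<iota>h(2) eh mh] by simp
      also have "\<dots> = cmp C (cmp C c m) (cmp C e \<iota>2)" using assoc[OF ei mh ch] by simp
      also have "\<dots> = zro C (src C j) (tgt C c)" using cm zcomp_r[OF ei] ob by simp
      finally show ?thesis .
    qed
    have chi: "cmp C (cmp C c h) i = zro C (src C i) (tgt C c)" if h: "h \<in> hom C (tgt C i) (tgt C i)" for h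
    proof -
      obtain \<alpha> where al: "\<alpha> \<in> hom C (src C i) (src C i)" "cmp C h i = cmp C i \<alpha>" using FIi h by blast
      have "cmp C (cmp C c h) i = cmp C (cmp C c i) \<alpha>" using al assoc h ch ih by metis
      then show ?thesis using ci zcomp_r al ob by metis
    qed
    have keyb: "\<exists>\<beta>\<in>hom C (tgt C c) (tgt C c). cmp C c h = cmp C \<beta> c"
      if h: "h \<in> hom C (tgt C i) (tgt C i)" and hj: "cmp C (cmp C c h) j = zro C (src C j) (tgt C c)" for h
    proof -
      have chh: "cmp C c h \<in> hom C (tgt C i) (tgt C c)" using comp h ch by blast
      have f: "cmp C (cmp C c h) s \<in> hom C B (tgt C c)" using comp chh sh by blast
      have "cmp C (cmp C c h) s = zro C B (tgt C c)"
      proof (rule biprod_zero[OF Bp f])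
        show "cmp C (cmp C (cmp C c h) s) \<iota>1 = zro C (src C i) (tgt C c)"
          using chi[OF h] s1 assoc \<iota>h sh chh by metis
        show "cmp C (cmp C (cmp C c h) s) \<iota>2 = zro C (src C j) (tgt C c)"
          using hj s2 assoc \<iota>h sh chh by metis
      qed
      then have "cmp C (cmp C (cmp C c h) m) e = cmp C (zro C (src C m) (tgt C c)) e"
        using me assoc eh mh chh zcomp_r ob by metis
      moreover have "cmp C (cmp C c h) m \<in> hom C (tgt C e) (tgt C c)" using comp chh mh eh homD by metis
      moreover have "zro C (src C m) (tgt C c) \<in> hom C (tgt C e) (tgt C c)" using zhom ob eh homD by metis
      ultimately have "cmp C (cmp C c h) m = zro C (src C m) (tgt C c)" using epiD[OF ee] by blast
      then show ?thesis using coker_fact[OF K] chh tm by metis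
    qed
    show "(fully_invariant_ses C j p \<longrightarrow> fully_coinvariant C (cmp C q p)) \<and>
        ((\<forall>g\<in>hom C (tgt C p) (tgt C p). \<exists>h\<in>hom C (src C p) (src C p). cmp C p h = cmp C g p)
            \<longrightarrow> fully_coinvariant C q)"
    proof (intro conjI impI)
      assume "fully_invariant_ses C j p"
      then have FIj: "\<forall>h\<in>hom C (tgt C j) (tgt C j). \<exists>\<alpha>\<in>hom C (src C j) (src C j). cmp C h j = cmp C j \<alpha>"
        unfolding fully_invariant_ses_def fully_invariant_def by auto
      have "\<forall>h\<in>hom C (src C c) (src C c). \<exists>\<beta>\<in>hom C (tgt C c) (tgt C c). cmp C c h = cmp C \<beta> c"
      proof
        fix h assume "h \<in> hom C (src C c) (src C c)"
        then have h: "h \<in> hom C (tgt C i) (tgt C i)" using ch homD by metis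
        obtain \<alpha> where al: "\<alpha> \<in> hom C (src C j) (src C j)" "cmp C h j = cmp C j \<alpha>" using FIj h assms(4) by metis
        have "cmp C (cmp C c h) j = cmp C (cmp C c j) \<alpha>" using al assoc h ch jh by metis
        then have "cmp C (cmp C c h) j = zro C (src C j) (tgt C c)" using cj zcomp_r al ob by metis
        then show "\<exists>\<beta>\<in>hom C (tgt C c) (tgt C c). cmp C c h = cmp C \<beta> c" using keyb h by blast
      qed
      then show "fully_coinvariant C (cmp C q p)" unfolding fully_coinvariant_def using qp epc by simp
    next
      assume L: "\<forall>g\<in>hom C (tgt C p) (tgt C p). \<exists>h\<in>hom C (src C p) (src C p). cmp C p h = cmp C g p"
      have epq: "epi C q"
      proof -
        have "\<forall>g\<in>Ar C. \<forall>h\<in>Ar C. src C g = tgt C q \<and> src C h = tgt C q \<and> tgt C g = tgt C h \<and>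
          cmp C g q = cmp C h q \<longrightarrow> g = h"
        proof (intro ballI impI)
          fix g h assume g: "g \<in> Ar C" and h: "h \<in> Ar C" and E: "src C g = tgt C q \<and> src C h = tgt C q \<and> tgt C g = tgt C h \<and>
            cmp C g q = cmp C h q"
          have gh: "g \<in> hom C (tgt C c) (tgt C g)" "h \<in> hom C (tgt C c) (tgt C g)"
            using g h E qh by (auto simp: hom_def)
          have "cmp C g c = cmp C (cmp C g q) p" using qp assoc[OF ph qh gh(1)] by simp
          also have "\<dots> = cmp C (cmp C h q) p" using E by simp
          also have "\<dots> = cmp C h c" using qp assoc[OF ph qh gh(2)] by simp
          finally have "cmp C g c = cmp C h c" .
          then show "g = h" using epiD[OF epc] gh by blast
        qed
        moreover have "q \<in> Ar C" using qh by (simp add: hom_def)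
        ultimately show ?thesis unfolding epi_def by blast
      qed
      have "\<forall>g\<in>hom C (src C q) (src C q). \<exists>\<beta>\<in>hom C (tgt C q) (tgt C q). cmp C q g = cmp C \<beta> q"
      proof
        fix g assume "g \<in> hom C (src C q) (src C q)"
        then have g: "g \<in> hom C (tgt C p) (tgt C p)" using qh homD by metis
        obtain h where h0: "h \<in> hom C (src C p) (src C p)" "cmp C p h = cmp C g p" using L g by blast
        have h: "h \<in> hom C (tgt C i) (tgt C i)" using h0 ph homD by metis
        have hjh: "cmp C h j \<in> hom C (src C j) (tgt C i)" using comp jh h by blast
        have "cmp C (cmp C c h) j = cmp C c (cmp C h j)" using assoc[OF jh h ch] by simp
        also have "\<dots> = cmp C q (cmp C p (cmp C h j))" using qp assoc[OF hjh ph qh] by simp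
        also have "\<dots> = cmp C q (cmp C (cmp C p h) j)" using assoc[OF jh h ph] by simp
        also have "\<dots> = cmp C q (cmp C (cmp C g p) j)" using h0 by simp
        also have "\<dots> = cmp C q (cmp C g (cmp C p j))" using assoc[OF jh ph g] by simp
        also have "\<dots> = cmp C q (cmp C g (zro C (src C j) (tgt C p)))" using pj0 by simp
        also have "\<dots> = cmp C q (zro C (src C j) (tgt C p))" using zcomp_l[OF g] ob by simp
        also have "\<dots> = zro C (src C j) (tgt C c)" using zcomp_l[OF qh] ob by simp
        finally obtain \<beta> where b: "\<beta> \<in> hom C (tgt C c) (tgt C c)" "cmp C c h = cmp C \<beta> c" using keyb h by blast
        have "cmp C (cmp C \<beta> q) p = cmp C (cmp C q g) p"
        proof -
          have "cmp C (cmp C \<beta> q) p = cmp C \<beta> c" using qp assoc[OF ph qh b(1)] by simp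
          also have "\<dots> = cmp C c h" using b by simp
          also have "\<dots> = cmp C q (cmp C p h)" using qp assoc[OF h ph qh] by simp
          also have "\<dots> = cmp C q (cmp C g p)" using h0 by simp
          also have "\<dots> = cmp C (cmp C q g) p" using assoc[OF ph g qh] by simp
          finally show ?thesis .
        qed
        moreover have "cmp C \<beta> q \<in> hom C (tgt C p) (tgt C c)" using comp b qh by blast
        moreover have "cmp C q g \<in> hom C (tgt C p) (tgt C c)" using comp g qh by blast
        ultimately have "cmp C \<beta> q = cmp C q g" using epiD[OF ep] ph homD by metis
        then show "\<exists>\<beta>\<in>hom C (tgt C q) (tgt C q). cmp C q g = cmp C \<beta> q" using b qh homD by metis
      qed
      then show "fully_coinvariant C q" unfolding fully_coinvariant_def using epq by simp
    qed
  qed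
  show ?thesis using P1 P2 by (rule conjI)
qed

end
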